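(* The morphism $\tau$ restricts to an isomorphism $\tau:U_\tau\xrightarrow{\sim}U_\rho$, one has $U_\rho\subseteq\bar M\setminus T_\rho$, and $\rho$ restricts to an isomorphism $\rho:U_\rho\xrightarrow{\sim}U_\tau$ with $\tau|_{U_\tau}=(\rho|_{U_\rho})^{-1}$.
   Context: Work over $\mathbb Q$. Let $\sigma_k$ be the $k$-th elementary symmetric polynomial in $x_0,\dots,x_4$ and $\bar M\subset\mathbb P^4$ the surface $\sigma_2=\sigma_4=0$. Let $t_0=(y-z)(xy+xz-z^2)$, $t_1=xz^2+yz^2-x^2y-z^3$, $t_2=x(z^2-y^2-xz)$, $t_3=z(yz-xz+x^2-y^2)$, $\tau_i=-(\prod_{j\in\{0,..,3\},j\neq i}t_j)(\sum_{j=0}^3t_j)$ ($i\le3$), $\tau_4=\prod_{j=0}^3t_j$, $T_\tau=\bigcap_iV_+(\tau_i)\subset\mathbb P^2$ (finite); $\tau=(\tau_0:\dots:\tau_4)$ defines a morphism $\mathbb P^2\setminus T_\tau\to\bar M$ (its scheme-theoretic image is $\bar M$). With $r_i=\prod_{j\in\{0,..,4\},j\neq i}x_j$, set $\rho_0=-(r_1+r_3)(r_0+r_1+r_2)$, $\rho_1=r_0(r_0+r_1+r_2+r_3)$, $\rho_2=r_0(r_0+r_2)$, $T_\rho=\bar M\cap\bigcap_{i}V_+(\rho_i)$, and $\rho=(\rho_0:\rho_1:\rho_2):\bar M\setminus T_\rho\to\mathbb P^2$. Let $\lambda=\rho_0(\tau_0,\dots,\tau_4)/x\in\mathbb Z[x,y,z]$,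 $C_\tau=V_+(\lambda)$, $U_\tau=\mathbb P^2\setminus C_\tau$ and $U_\rho=\tau(U_\tau)\subset\bar M$. *)

theory Defs
  imports Main "HOL-Library.Poly_Mapping"
begin

definition t0 :: "'a::comm_ring_1 \<Rightarrow> 'a \<Rightarrow> 'a \<Rightarrow> 'a" where
  "t0 x y z = (y - z) * (x*y + x*z - z^2)"
definition t1 :: "'a::comm_ring_1 \<Rightarrow> 'a \<Rightarrow> 'a \<Rightarrow> 'a" where
  "t1 x y z = x*z^2 + y*z^2 - x^2*y - z^3"
definition t2 :: "'a::comm_ring_1 \<Rightarrow> 'a \<Rightarrow> 'a \<Rightarrow> 'a" where
  "t2 x y z = x * (z^2 - y^2 - x*z)"
definition t3 :: "'a::comm_ring_1 \<Rightarrow> 'a \<Rightarrow> 'a \<Rightarrow> 'a" where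
  "t3 x y z = z * (y*z - x*z + x^2 - y^2)"

definition tt :: "nat \<Rightarrow> 'a::comm_ring_1 \<Rightarrow> 'a \<Rightarrow> 'a \<Rightarrow> 'a" where
  "tt j x y z = (if j = 0 then t0 x y z else if j = 1 then t1 x y z
                 else if j = 2 then t2 x y z else t3 x y z)"

text \<open>The five coordinates tau_0..tau_4 (entries with index >= 5 are 0 and never used).\<close>
definition tau :: "'a::comm_ring_1 \<Rightarrow> 'a \<Rightarrow> 'a \<Rightarrow> nat \<Rightarrow> 'a" where
  "tau x y z i =
     (if i < 4 then - (\<Prod>j\<in>{0..3} - {i}. tt j x y z) * (\<Sum>j\<in>{0..3}. tt j x y z)
      else if i = 4 then (\<Prod>j\<in>{0..3}. tt j x y z) else 0)"

definition esym :: "nat \<Rightarrow> (nat \<Rightarrow> 'a::comm_ring_1) \<Rightarrow> 'a" where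
  "esym k v = (\<Sum>S\<in>{S. S \<subseteq> {0..<5} \<and> card S = k}. \<Prod>i\<in>S. v i)"

definition rr :: "nat \<Rightarrow> (nat \<Rightarrow> 'a::comm_ring_1) \<Rightarrow> 'a" where
  "rr i v = (\<Prod>j\<in>{0..<5} - {i}. v j)"

definition rho0 :: "(nat \<Rightarrow> 'a::comm_ring_1) \<Rightarrow> 'a" where
  "rho0 v = - (rr 1 v + rr 3 v) * (rr 0 v + rr 1 v + rr 2 v)"
definition rho1 :: "(nat \<Rightarrow> 'a::comm_ring_1) \<Rightarrow> 'a" where
  "rho1 v = rr 0 v * (rr 0 v + rr 1 v + rr 2 v + rr 3 v)"
definition rho2 :: "(nat \<Rightarrow> 'a::comm_ring_1) \<Rightarrow> 'a" where
  "rho2 v = rr 0 v * (rr 0 v + rr 2 v)"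

type_synonym zpoly = "(nat \<Rightarrow>\<^sub>0 nat) \<Rightarrow>\<^sub>0 int"

definition Var :: "nat \<Rightarrow> zpoly" where
  "Var i = Poly_Mapping.single (Poly_Mapping.single i 1) 1"

definition lambda_poly :: zpoly where
  "lambda_poly = (THE q. Var 0 * q = rho0 (tau (Var 0) (Var 1) (Var 2)))"

definition peval :: "zpoly \<Rightarrow> 'a::comm_ring_1 \<times> 'a \<times> 'a \<Rightarrow> 'a" where
  "peval p P = (case P of (x, y, z) \<Rightarrow>
     (\<Sum>m\<in>Poly_Mapping.keys p. of_int (Poly_Mapping.lookup p m) *
        x ^ Poly_Mapping.lookup m 0 * y ^ Poly_Mapping.lookup m 1 * z ^ Poly_Mapping.lookup m 2))"

text \<open>Points of P^2 are nonzero triples, points of P^4 nonzero vectors (indices 0..4);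
  equality of projective points is proportionality.\<close>

definition P2 :: "('a::field \<times> 'a \<times> 'a) set" where
  "P2 = {p. p \<noteq> (0, 0, 0)}"

definition proj2_eq :: "'a::field \<times> 'a \<times> 'a \<Rightarrow> 'a \<times> 'a \<times> 'a \<Rightarrow> bool" where
  "proj2_eq p q = (case p of (x, y, z) \<Rightarrow> p \<noteq> (0, 0, 0) \<and>
      (\<exists>c. c \<noteq> 0 \<and> q = (c * x, c * y, c * z)))"

definition proj4_eq :: "(nat \<Rightarrow> 'a::field) \<Rightarrow> (nat \<Rightarrow> 'a) \<Rightarrow> bool" where
  "proj4_eq v w = ((\<exists>i<5. v i \<noteq> 0) \<and> (\<exists>c. c \<noteq> 0 \<and> (\<forall>i<5. w i = c * v i)))"

definition tau_pt :: "'a::field \<times> 'a \<times> 'a \<Rightarrow> nat \<Rightarrow> 'a" where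
  "tau_pt P = (case P of (x, y, z) \<Rightarrow> tau x y z)"

definition rho_pt :: "(nat \<Rightarrow> 'a::field) \<Rightarrow> 'a \<times> 'a \<times> 'a" where
  "rho_pt v = (rho0 v, rho1 v, rho2 v)"

definition Mbar :: "(nat \<Rightarrow> 'a::field) set" where
  "Mbar = {v. (\<exists>i<5. v i \<noteq> 0) \<and> esym 2 v = 0 \<and> esym 4 v = 0}"

definition T_tau :: "('a::field \<times> 'a \<times> 'a) set" where
  "T_tau = {p \<in> P2. \<forall>i<5. tau_pt p i = 0}"

definition T_rho :: "(nat \<Rightarrow> 'a::field) set" where
  "T_rho = {v \<in> Mbar. rho0 v = 0 \<and> rho1 v = 0 \<and> rho2 v = 0}"

definition C_tau :: "('a::field \<times> 'a \<times> 'a) set" where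
  "C_tau = {p \<in> P2. peval lambda_poly p = 0}"

definition U_tau :: "('a::field \<times> 'a \<times> 'a) set" where
  "U_tau = P2 - C_tau"

text \<open>U_rho = tau(U_tau), as the set of all representatives of image points.\<close>
definition U_rho :: "(nat \<Rightarrow> 'a::field) set" where
  "U_rho = {v. \<exists>p\<in>U_tau. proj4_eq (tau_pt p) v}"

end

theory Submission
  imports Defs
begin


lemma set03: "{0..3::nat} = {0,1,2,3}" by auto
lemma set05: "{0..<5::nat} = {0,1,2,3,4}" by auto

lemma tau_expl:
  fixes x y z :: "'a::comm_ring_1"
  shows "tau x y z 0 = - (t1 x y z * t2 x y z * t3 x y z) * (t0 x y z + t1 x y z + t2 x y z + t3 x y z)"
    "tau x y z 1 = - (t0 x y z * t2 x y z * t3 x y z) * (t0 x y z + t1 x y z + t2 x y z + t3 x y z)"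
    "tau x y z 2 = - (t0 x y z * t1 x y z * t3 x y z) * (t0 x y z + t1 x y z + t2 x y z + t3 x y z)"
    "tau x y z 3 = - (t0 x y z * t1 x y z * t2 x y z) * (t0 x y z + t1 x y z + t2 x y z + t3 x y z)"
    "tau x y z 4 = t0 x y z * t1 x y z * t2 x y z * t3 x y z"
  by (simp_all add: tau_def set03 tt_def insert_Diff_if mult_ac add_ac)

lemma rr_expl:
  fixes v :: "nat \<Rightarrow> 'a::comm_ring_1"
  shows "rr 0 v = v 1 * v 2 * v 3 * v 4" "rr 1 v = v 0 * v 2 * v 3 * v 4"
    "rr 2 v = v 0 * v 1 * v 3 * v 4" "rr 3 v = v 0 * v 1 * v 2 * v 4"
    "rr 4 v = v 0 * v 1 * v 2 * v 3"
  by (simp_all add: rr_def set05 insert_Diff_if mult_ac)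

lemma gen_ident:
  fixes a b c d Ss :: "'a::comm_ring_1"
  defines "Pp \<equiv> a*b*c*d"
  shows "(-(b*c*d)*Ss) * (-(a*c*d)*Ss) * (-(a*b*d)*Ss) * Pp = - (Ss ^ 3 * Pp ^ 3 * d)"
  unfolding Pp_def by (simp add: power3_eq_cube mult_ac)

definition gg :: "'a::comm_ring_1 \<Rightarrow> 'a \<Rightarrow> 'a \<Rightarrow> 'a" where
 "gg x y z = z^5 - 2*y*z^4 + y^2*z^3 - x*z^4 + x*y*z^3 + x*y^2*z^2 - x*y^3*z - x^2*z^3 + x^2*y*z^2 + x^3*z^2 - x^3*y^2"

lemma g0: fixes x y z :: "'a::comm_ring_1"
  shows "-(t1 x y z + t3 x y z) * (t0 x y z + t1 x y z + t2 x y z) = x * gg x y z"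
  by (simp add: t0_def t1_def t2_def t3_def gg_def algebra_simps power2_eq_square power3_eq_cube eval_nat_numeral)
lemma g1: fixes x y z :: "'a::comm_ring_1"
  shows "t0 x y z * (t0 x y z + t1 x y z + t2 x y z + t3 x y z) = y * gg x y z"
  by (simp add: t0_def t1_def t2_def t3_def gg_def algebra_simps power2_eq_square power3_eq_cube eval_nat_numeral)
lemma g2: fixes x y z :: "'a::comm_ring_1"
  shows "t0 x y z * (t0 x y z + t2 x y z) = z * gg x y z"
  by (simp add: t0_def t1_def t2_def t3_def gg_def algebra_simps power2_eq_square power3_eq_cube eval_nat_numeral)
lemma e2: fixes x y z :: "'a::comm_ring_1"
  shows "(t0 x y z + t1 x y z + t2 x y z + t3 x y z) * (t0 x y z * t1 x y z + t0 x y z * t2 x y z + t0 x y z * t3 x y z + t1 x y z * t2 x y z + t1 x y z * t3 x y z + t2 x y z * t3 x y z)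
   = t0 x y z * t1 x y z * t2 x y z + t0 x y z * t1 x y z * t3 x y z + t0 x y z * t2 x y z * t3 x y z + t1 x y z * t2 x y z * t3 x y z"
  by (simp add: t0_def t1_def t2_def t3_def algebra_simps power2_eq_square power3_eq_cube eval_nat_numeral)



definition mon :: "(nat \<Rightarrow>\<^sub>0 nat) \<Rightarrow> 'a::comm_ring_1 \<Rightarrow> 'a \<Rightarrow> 'a \<Rightarrow> 'a" where
  "mon m x y z = x ^ Poly_Mapping.lookup m 0 * y ^ Poly_Mapping.lookup m 1 * z ^ Poly_Mapping.lookup m 2"

lemma peval_eq: "peval p (x,y,z) = (\<Sum>m\<in>Poly_Mapping.keys p. of_int (Poly_Mapping.lookup p m) * mon m x y z)"
  by (simp add: peval_def mon_def mult.assoc)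

lemma peval_sup:
  assumes "finite K" "Poly_Mapping.keys p \<subseteq> K"
  shows "peval p (x,y,z) = (\<Sum>m\<in>K. of_int (Poly_Mapping.lookup p m) * mon m x y z)"
  unfolding peval_eq
  by (rule sum.mono_neutral_left) (use assms in \<open>auto simp: in_keys_iff\<close>)

lemma peval_add: "peval (p + q) (x,y,z) = peval p (x,y,z) + peval q (x,y,z)"
proof -
  let ?K = "Poly_Mapping.keys p \<union> Poly_Mapping.keys q"
  have f: "finite ?K" by simp
  show ?thesis
    using keys_add[of p q]
    by (simp add: peval_sup[OF f] lookup_add sum.distrib distrib_right)
qed

lemma peval_diff: "peval (p - q) (x,y,z) = peval p (x,y,z) - peval q (x,y,z)"
proof -
  let ?K = "Poly_Mapping.keys p \<union> Poly_Mapping.keys q"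
  have f: "finite ?K" by simp
  show ?thesis
    using keys_diff[of p q]
    by (simp add: peval_sup[OF f] lookup_minus sum_subtractf left_diff_distrib)
qed

lemma peval_uminus: "peval (- p) (x,y,z) = - peval p (x,y,z)"
  by (simp add: peval_eq sum_negf)

lemma peval_single: "peval (Poly_Mapping.single m c) (x,y,z) = of_int c * mon m x y z"
  by (subst peval_sup[of "{m}"]) auto

lemma mon_add: "mon (a + b) x y z = mon a x y z * mon b x y z"
  by (simp add: mon_def lookup_add power_add mult_ac)

lemma peval_mult: "peval (p * q) (x,y,z) = peval p (x,y,z) * peval q (x,y,z)"
proof -
  have sing: "peval (frag_of a * q) (x,y,z) = peval (frag_of a) (x,y,z) * peval q (x,y,z)" for a
    apply (rule frag_induction[OF subset_UNIV, where P="\<lambda>q. peval (frag_of a * q) (x,y,z) = peval (frag_of a) (x,y,z) * peval q (x,y,z)"])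
      apply (simp add: peval_eq)
     apply (simp add: mult_single peval_single mon_add)
    apply (simp add: right_diff_distrib peval_diff)
    done
  show ?thesis
    apply (rule frag_induction[OF subset_UNIV, where P="\<lambda>p. peval (p * q) (x,y,z) = peval p (x,y,z) * peval q (x,y,z)"])
      apply (simp add: peval_eq)
     apply (rule sing)
    apply (simp add: left_diff_distrib peval_diff)
    done
qed

lemma peval_one: "peval 1 (x,y,z) = 1"
  by (simp add: single_one[symmetric] peval_single mon_def del: single_one)

lemma peval_power: "peval (p ^ n) (x,y,z) = peval p (x,y,z) ^ n"
  by (induction n) (simp_all add: peval_one peval_mult)

lemma peval_numeral: "peval (numeral n) (x,y,z) = numeral n"
  by (simp add: single_numeral[symmetric] peval_single mon_def del: single_numeral)

lemma peval_Var: "peval (Var 0) (x,y,z) = x" "peval (Var 1) (x,y,z) = y" "peval (Var 2) (x,y,z) = z"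
  by (simp_all add: Var_def peval_single mon_def lookup_single)

lemma Var0_nz: "Var 0 \<noteq> 0"
  by (simp add: Var_def)



lemma esym_sets2: "{S. S \<subseteq> {0..<5::nat} \<and> card S = 2} = (\<lambda>(a,b). {a,b}) ` {(a,b). a < b \<and> b < 5}"
proof (rule set_eqI, rule iffI)
  fix S assume "S \<in> {S. S \<subseteq> {0..<5::nat} \<and> card S = 2}"
  then have S: "S \<subseteq> {0..<5}" "card S = 2" by auto
  then obtain a b where ab: "S = {a,b}" "a \<noteq> b" by (auto simp: card_2_iff)
  show "S \<in> (\<lambda>(a,b). {a,b}) ` {(a,b). a < b \<and> b < 5}"
  proof (cases "a < b")
    case True then show ?thesis using S ab by (auto intro!: image_eqI[of _ _ "(a,b)"])
  next
    case False then show ?thesis using S ab by (auto intro!: image_eqI[of _ _ "(b,a)"])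
  qed
qed (auto simp: card_insert_if)

lemma inj2: "inj_on (\<lambda>(a::nat,b). {a,b}) {(a,b). a < b \<and> b < 5}"
  by (auto simp: inj_on_def doubleton_eq_iff)

lemma pairs5: "{(a,b). a < b \<and> b < (5::nat)} = {(0,1),(0,2),(0,3),(0,4),(1,2),(1,3),(1,4),(2,3),(2,4),(3,4)}"
  by (auto simp: less_Suc_eq numeral_eq_Suc)

lemma esym2_expl: "esym 2 v = v 0 * v 1 + v 0 * v 2 + v 0 * v 3 + v 0 * v 4 + v 1 * v 2 + v 1 * v 3 + v 1 * v 4 + v 2 * v 3 + v 2 * v 4 + v 3 * v 4"
  unfolding esym_def esym_sets2 unfolding sum.reindex[OF inj2] unfolding pairs5
  by (simp add: add_ac)

lemma esym_sets4: "{S. S \<subseteq> {0..<5::nat} \<and> card S = 4} = (\<lambda>i. {0..<5} - {i}) ` {0..<5}"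
proof (rule set_eqI, rule iffI)
  fix S assume "S \<in> {S. S \<subseteq> {0..<5::nat} \<and> card S = 4}"
  then have S: "S \<subseteq> {0..<5}" "card S = 4" by auto
  have "card ({0..<5} - S) = 1" using S by (simp add: card_Diff_subset finite_subset)
  then obtain i where i: "{0..<5} - S = {i}" by (auto simp: card_1_singleton_iff)
  then have "S = {0..<5} - {i}" "i \<in> {0..<5}" using S by auto
  then show "S \<in> (\<lambda>i. {0..<5} - {i}) ` {0..<5}" by blast
qed auto

lemma inj4: "inj_on (\<lambda>i::nat. {0..<5} - {i}) {0..<5}"
  by (auto simp: inj_on_def)

lemma esym4_expl: "esym 4 v = v 0 * v 1 * v 2 * v 3 + v 0 * v 1 * v 2 * v 4 + v 0 * v 1 * v 3 * v 4 + v 0 * v 2 * v 3 * v 4 + v 1 * v 2 * v 3 * v 4"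
  unfolding esym_def esym_sets4 sum.reindex[OF inj4]
  by (simp add: set05 insert_Diff_if add_ac mult_ac)



definition Sg :: "'a::comm_ring_1 \<Rightarrow> 'a \<Rightarrow> 'a \<Rightarrow> 'a" where
  "Sg x y z = t0 x y z + t1 x y z + t2 x y z + t3 x y z"
definition Pg :: "'a::comm_ring_1 \<Rightarrow> 'a \<Rightarrow> 'a \<Rightarrow> 'a" where
  "Pg x y z = t0 x y z * t1 x y z * t2 x y z * t3 x y z"
definition LAM :: "'a::comm_ring_1 \<Rightarrow> 'a \<Rightarrow> 'a \<Rightarrow> 'a" where
  "LAM x y z = Sg x y z ^ 6 * Pg x y z ^ 6 * gg x y z"

lemma rr_tau:
  fixes x y z :: "'a::comm_ring_1"
  shows "rr 0 (tau x y z) = - (Sg x y z ^ 3 * Pg x y z ^ 3 * t0 x y z)"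
    "rr 1 (tau x y z) = - (Sg x y z ^ 3 * Pg x y z ^ 3 * t1 x y z)"
    "rr 2 (tau x y z) = - (Sg x y z ^ 3 * Pg x y z ^ 3 * t2 x y z)"
    "rr 3 (tau x y z) = - (Sg x y z ^ 3 * Pg x y z ^ 3 * t3 x y z)"
  unfolding rr_expl tau_expl Sg_def Pg_def by (simp_all add: power3_eq_cube mult_ac)

lemma Kid: fixes K a b c d :: "'a::comm_ring_1"
  shows "- ((- (K * b)) + (- (K * d))) * ((- (K * a)) + (- (K * b)) + (- (K * c))) = K^2 * (-(b + d) * (a + b + c))"
    "(- (K * a)) * ((- (K * a)) + (- (K * b)) + (- (K * c)) + (- (K * d))) = K^2 * (a * (a+b+c+d))"
    "(- (K * a)) * ((- (K * a)) + (- (K * c))) = K^2 * (a * (a + c))"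
  by (simp_all add: algebra_simps power2_eq_square)

lemma K6: fixes s p :: "'a::comm_ring_1" shows "(s^3 * p^3)^2 = s^6 * p^6"
  by (simp add: power_mult_distrib flip: power_mult)

lemma rho_tau:
  fixes x y z :: "'a::comm_ring_1"
  shows "rho0 (tau x y z) = x * LAM x y z" "rho1 (tau x y z) = y * LAM x y z"
    "rho2 (tau x y z) = z * LAM x y z"
proof -
  let ?K = "Sg x y z ^ 3 * Pg x y z ^ 3"
  show "rho0 (tau x y z) = x * LAM x y z"
    unfolding rho0_def rr_tau Kid g0 LAM_def K6 by (simp add: mult_ac)
  show "rho1 (tau x y z) = y * LAM x y z"
    unfolding rho1_def rr_tau Kid g1 LAM_def K6 by (simp add: mult_ac)
  show "rho2 (tau x y z) = z * LAM x y z"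
    unfolding rho2_def rr_tau Kid g2 LAM_def K6 by (simp add: mult_ac)
qed

lemma lambda_eq: "lambda_poly = LAM (Var 0) (Var 1) (Var 2)"
  unfolding lambda_poly_def
proof (rule the_equality)
  show "Var 0 * LAM (Var 0) (Var 1) (Var 2) = rho0 (tau (Var 0) (Var 1) (Var 2))"
    by (simp add: rho_tau)
  fix q assume "Var 0 * q = rho0 (tau (Var 0) (Var 1) (Var 2))"
  then have "Var 0 * q = Var 0 * LAM (Var 0) (Var 1) (Var 2)" by (simp add: rho_tau)
  then show "q = LAM (Var 0) (Var 1) (Var 2)" using Var0_nz by simp
qed

lemma peval_lambda: "peval lambda_poly (x,y,z) = LAM x y z"
  unfolding lambda_eq LAM_def Sg_def Pg_def gg_def t0_def t1_def t2_def t3_def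
  by (simp only: peval_mult peval_add peval_diff peval_power peval_numeral peval_Var peval_uminus)



lemma t_scale:
  fixes x y z c :: "'a::comm_ring_1"
  shows "t0 (c*x) (c*y) (c*z) = c^3 * t0 x y z" "t1 (c*x) (c*y) (c*z) = c^3 * t1 x y z"
    "t2 (c*x) (c*y) (c*z) = c^3 * t2 x y z" "t3 (c*x) (c*y) (c*z) = c^3 * t3 x y z"
  by (simp_all add: t0_def t1_def t2_def t3_def algebra_simps power2_eq_square power3_eq_cube)

lemma gg_scale:
  fixes x y z c :: "'a::comm_ring_1"
  shows "gg (c*x) (c*y) (c*z) = c^5 * gg x y z"
  by (simp add: gg_def algebra_simps power_mult_distrib eval_nat_numeral)

lemma atom95: fixes a b d c :: "'a::comm_ring_1"
  shows "(c^3*a)^6*(c^12*b)^6*(c^5*d) = c^95*(a^6*b^6*d)"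
proof -
  have "(c^3*a)^6*(c^12*b)^6*(c^5*d) = ((c^3)^6*(c^12)^6*c^5)*(a^6*b^6*d)"
    by (simp only: power_mult_distrib mult_ac)
  also have "(c^3)^6*(c^12)^6*c^5 = c^95" by (simp flip: power_mult power_add)
  finally show ?thesis .
qed

lemma LAM_scale:
  fixes x y z c :: "'a::comm_ring_1"
  shows "LAM (c*x) (c*y) (c*z) = c^95 * LAM x y z"
proof -
  have "Sg (c*x) (c*y) (c*z) = c^3 * Sg x y z" by (simp add: Sg_def t_scale algebra_simps)
  moreover have "Pg (c*x) (c*y) (c*z) = c^12 * Pg x y z"
    by (simp add: Pg_def t_scale mult_ac flip: power_add)
  ultimately show ?thesis
    by (simp only: LAM_def gg_scale atom95 mult.commute[of _ "c^3"] mult.commute[of _ "c^12"])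
qed

lemma tau_scale:
  fixes x y z c :: "'a::comm_ring_1"
  shows "tau (c*x) (c*y) (c*z) i = c^12 * tau x y z i"
proof -
  have "i = 0 \<or> i = 1 \<or> i = 2 \<or> i = 3 \<or> i = 4 \<or> i \<ge> 5" by arith
  then show ?thesis
  proof (elim disjE)
    assume "5 \<le> i" then show ?thesis by (simp add: tau_def)
  qed (simp_all only: tau_expl t_scale, simp_all add: algebra_simps flip: power_add)
qed

lemma rr_scale:
  fixes v :: "nat \<Rightarrow> 'a::comm_ring_1"
  assumes "i < 5"
  shows "rr i (\<lambda>j. c * v j) = c^4 * rr i v"
proof -
  have "card ({0..<5} - {i}) = 4" using assms by simp
  then show ?thesis by (simp add: rr_def prod.distrib)
qed

lemma rho_scale:
  fixes v :: "nat \<Rightarrow> 'a::comm_ring_1"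
  shows "rho0 (\<lambda>j. c * v j) = c^8 * rho0 v" "rho1 (\<lambda>j. c * v j) = c^8 * rho1 v"
    "rho2 (\<lambda>j. c * v j) = c^8 * rho2 v"
  by (simp_all add: rho0_def rho1_def rho2_def rr_scale algebra_simps flip: power_add)

lemma rr_cong: "\<forall>i<5. w i = v i \<Longrightarrow> rr k w = rr k v"
  unfolding rr_def by (rule prod.cong) auto

lemma rho_cong:
  assumes "\<forall>i<5. w i = v i"
  shows "rho0 w = rho0 v" "rho1 w = rho1 v" "rho2 w = rho2 v"
  using rr_cong[OF assms] by (simp_all add: rho0_def rho1_def rho2_def)

lemma esym_cong:
  assumes "\<forall>i<5. w i = v i"
  shows "esym k w = esym k v"
  unfolding esym_def
  by (rule sum.cong[OF refl], rule prod.cong[OF refl]) (use assms in auto)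

lemma esym_scale:
  fixes v :: "nat \<Rightarrow> 'a::comm_ring_1"
  shows "esym k (\<lambda>j. c * v j) = c^k * esym k v"
  unfolding esym_def sum_distrib_left
  by (rule sum.cong[OF refl]) (simp add: prod.distrib)

lemma esym_tau:
  fixes x y z :: "'a::comm_ring_1"
  shows "esym 2 (tau x y z) = 0" "esym 4 (tau x y z) = 0"
proof -
  have gen2: "(-(b*c*d)*s)*(-(a*c*d)*s) + (-(b*c*d)*s)*(-(a*b*d)*s) + (-(b*c*d)*s)*(-(a*b*c)*s) + (-(b*c*d)*s)*(a*b*c*d)
     + (-(a*c*d)*s)*(-(a*b*d)*s) + (-(a*c*d)*s)*(-(a*b*c)*s) + (-(a*c*d)*s)*(a*b*c*d)
     + (-(a*b*d)*s)*(-(a*b*c)*s) + (-(a*b*d)*s)*(a*b*c*d) + (-(a*b*c)*s)*(a*b*c*d)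
     = s * (a*b*c*d) * (s * (a*b + a*c + a*d + b*c + b*d + c*d) - (a*b*c + a*b*d + a*c*d + b*c*d))"
    for a b c d s :: 'a
    by (simp add: algebra_simps)
  have gen4: "(-(b*c*d)*s)*(-(a*c*d)*s)*(-(a*b*d)*s)*(-(a*b*c)*s) + (-(b*c*d)*s)*(-(a*c*d)*s)*(-(a*b*d)*s)*(a*b*c*d)
     + (-(b*c*d)*s)*(-(a*c*d)*s)*(-(a*b*c)*s)*(a*b*c*d) + (-(b*c*d)*s)*(-(a*b*d)*s)*(-(a*b*c)*s)*(a*b*c*d)
     + (-(a*c*d)*s)*(-(a*b*d)*s)*(-(a*b*c)*s)*(a*b*c*d)
     = s^3 * (a*b*c*d)^3 * (s - (a+b+c+d))"
    for a b c d s :: 'a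
    by (simp add: algebra_simps power3_eq_cube)
  show "esym 2 (tau x y z) = 0"
    unfolding esym2_expl tau_expl gen2 e2 by simp
  show "esym 4 (tau x y z) = 0"
    unfolding esym4_expl tau_expl gen4 by simp
qed



lemma Utau_iff: "((x,y,z) :: 'a::field \<times> 'a \<times> 'a) \<in> U_tau \<longleftrightarrow> (x,y,z) \<noteq> (0,0,0) \<and> LAM x y z \<noteq> 0"
  by (auto simp: U_tau_def C_tau_def P2_def peval_lambda)

lemma rho_zero: "v 0 = 0 \<Longrightarrow> v 1 = 0 \<Longrightarrow> v 2 = 0 \<Longrightarrow> v 3 = 0 \<Longrightarrow> v 4 = 0 \<Longrightarrow> rho0 v = 0 \<and> rho1 v = 0 \<and> rho2 v = 0"
  unfolding rho0_def rho1_def rho2_def rr_expl by simp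

lemma tau_nz:
  fixes x y z :: "'a::field"
  assumes "(x,y,z) \<in> U_tau"
  shows "\<exists>i<5. tau x y z i \<noteq> 0"
proof (rule ccontr)
  assume "\<not> ?thesis"
  then have "rho0 (tau x y z) = 0 \<and> rho1 (tau x y z) = 0 \<and> rho2 (tau x y z) = 0"
    by (intro rho_zero) auto
  then have "x * LAM x y z = 0" "y * LAM x y z = 0" "z * LAM x y z = 0" by (simp_all add: rho_tau)
  then show False using assms by (auto simp: Utau_iff)
qed

lemma scaled_rho:
  fixes x y z :: "'a::field"
  assumes "\<forall>i<5. w i = c * tau x y z i"
  shows "rho0 w = c^8 * (x * LAM x y z)" "rho1 w = c^8 * (y * LAM x y z)" "rho2 w = c^8 * (z * LAM x y z)"
  using rho_cong[OF assms] rho_scale[of c "tau x y z"] rho_tau[of x y z] by simp_all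

theorem lemma8p5:
  shows "(U_tau :: ('a::field_char_0 \<times> 'a \<times> 'a) set) \<subseteq> P2 - T_tau
    \<and> (\<forall>p\<in>(U_tau :: ('a \<times> 'a \<times> 'a) set). tau_pt p \<in> Mbar)
    \<and> (\<forall>p\<in>(U_tau :: ('a \<times> 'a \<times> 'a) set). \<forall>q\<in>U_tau.
          proj4_eq (tau_pt p) (tau_pt q) \<longrightarrow> proj2_eq p q)
    \<and> (U_rho :: (nat \<Rightarrow> 'a) set) \<subseteq> Mbar - T_rho
    \<and> (\<forall>v\<in>(U_rho :: (nat \<Rightarrow> 'a) set). rho_pt v \<in> U_tau \<and> proj4_eq (tau_pt (rho_pt v)) v)
    \<and> (\<forall>p\<in>(U_tau :: ('a \<times> 'a \<times> 'a) set). proj2_eq (rho_pt (tau_pt p)) p)"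
proof (intro conjI)
  show "(U_tau :: ('a \<times> 'a \<times> 'a) set) \<subseteq> P2 - T_tau"
  proof
    fix p :: "'a \<times> 'a \<times> 'a" assume p: "p \<in> U_tau"
    obtain x y z where pe: "p = (x,y,z)" by (cases p)
    show "p \<in> P2 - T_tau"
      using p tau_nz[of x y z] by (auto simp: pe T_tau_def tau_pt_def U_tau_def)
  qed
  show "\<forall>p\<in>(U_tau :: ('a \<times> 'a \<times> 'a) set). tau_pt p \<in> Mbar"
  proof
    fix p :: "'a \<times> 'a \<times> 'a" assume p: "p \<in> U_tau"
    obtain x y z where pe: "p = (x,y,z)" by (cases p)
    show "tau_pt p \<in> Mbar"
      using p tau_nz[of x y z] esym_tau[of x y z] by (auto simp: pe Mbar_def tau_pt_def)
  qed
  show "\<forall>p\<in>(U_tau :: ('a \<times> 'a \<times> 'a) set). \<forall>q\<in>U_tau.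
          proj4_eq (tau_pt p) (tau_pt q) \<longrightarrow> proj2_eq p q"
  proof (intro ballI impI)
    fix p q :: "'a \<times> 'a \<times> 'a" assume p: "p \<in> U_tau" and q: "q \<in> U_tau"
      and pq: "proj4_eq (tau_pt p) (tau_pt q)"
    obtain x y z where pe: "p = (x,y,z)" by (cases p)
    obtain x' y' z' where qe: "q = (x',y',z')" by (cases q)
    from pq obtain c where c: "c \<noteq> 0" "\<forall>i<5. tau x' y' z' i = c * tau x y z i"
      by (auto simp: proj4_eq_def pe qe tau_pt_def)
    have L: "LAM x y z \<noteq> 0" "LAM x' y' z' \<noteq> 0" "(x,y,z) \<noteq> (0,0,0)"
      using p q by (auto simp: pe qe Utau_iff)
    have e: "x' * LAM x' y' z' = c^8 * (x * LAM x y z)" "y' * LAM x' y' z' = c^8 * (y * LAM x y z)"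
      "z' * LAM x' y' z' = c^8 * (z * LAM x y z)"
      using scaled_rho[OF c(2)] rho_tau[of x' y' z'] by simp_all
    define d where "d = c^8 * LAM x y z / LAM x' y' z'"
    have "d \<noteq> 0" using c L by (simp add: d_def)
    moreover have "x' = d * x" "y' = d * y" "z' = d * z"
      using e L by (simp_all add: d_def field_simps)
    ultimately show "proj2_eq p q" using L by (auto simp: proj2_eq_def pe qe)
  qed
  show "(U_rho :: (nat \<Rightarrow> 'a) set) \<subseteq> Mbar - T_rho"
  proof
    fix v :: "nat \<Rightarrow> 'a" assume "v \<in> U_rho"
    then obtain p where p: "p \<in> U_tau" and pv: "proj4_eq (tau_pt p) v" by (auto simp: U_rho_def)
    obtain x y z where pe: "p = (x,y,z)" by (cases p)
    from pv obtain c where c: "c \<noteq> 0" "\<forall>i<5. v i = c * tau x y z i"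
      by (auto simp: proj4_eq_def pe tau_pt_def)
    obtain i where i: "i < 5" "tau x y z i \<noteq> 0" using tau_nz[of x y z] p pe by auto
    have L: "LAM x y z \<noteq> 0" "(x,y,z) \<noteq> (0,0,0)" using p by (auto simp: pe Utau_iff)
    have "esym 2 v = 0" "esym 4 v = 0"
      using esym_cong[OF c(2)] esym_scale[where c=c and v="tau x y z"] esym_tau[of x y z] by simp_all
    moreover have "\<exists>i<5. v i \<noteq> 0" using i c by auto
    moreover have "\<not> (rho0 v = 0 \<and> rho1 v = 0 \<and> rho2 v = 0)"
      using scaled_rho[OF c(2)] c L by auto
    ultimately show "v \<in> Mbar - T_rho" by (auto simp: Mbar_def T_rho_def)
  qed
  show "\<forall>v\<in>(U_rho :: (nat \<Rightarrow> 'a) set). rho_pt v \<in> U_tau \<and> proj4_eq (tau_pt (rho_pt v)) v"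
  proof
    fix v :: "nat \<Rightarrow> 'a" assume "v \<in> U_rho"
    then obtain p where p: "p \<in> U_tau" and pv: "proj4_eq (tau_pt p) v" by (auto simp: U_rho_def)
    obtain x y z where pe: "p = (x,y,z)" by (cases p)
    from pv obtain c where c: "c \<noteq> 0" "\<forall>i<5. v i = c * tau x y z i"
      by (auto simp: proj4_eq_def pe tau_pt_def)
    obtain i where i: "i < 5" "tau x y z i \<noteq> 0" using tau_nz[of x y z] p pe by auto
    have L: "LAM x y z \<noteq> 0" "(x,y,z) \<noteq> (0,0,0)" using p by (auto simp: pe Utau_iff)
    define d where "d = c^8 * LAM x y z"
    have d: "d \<noteq> 0" using c L by (simp add: d_def)
    have rv: "rho_pt v = (d*x, d*y, d*z)"
      using scaled_rho[OF c(2)] by (simp add: rho_pt_def d_def mult_ac)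
    have "rho_pt v \<in> U_tau"
      using d L by (auto simp: rv Utau_iff LAM_scale)
    moreover have "proj4_eq (tau_pt (rho_pt v)) v"
      unfolding proj4_eq_def
    proof (rule conjI)
      show "\<exists>i<5. tau_pt (rho_pt v) i \<noteq> 0"
        using i d by (auto simp: rv tau_pt_def tau_scale)
      show "\<exists>e. e \<noteq> 0 \<and> (\<forall>i<5. v i = e * tau_pt (rho_pt v) i)"
        using c d by (intro exI[of _ "c / d^12"]) (simp add: rv tau_pt_def tau_scale)
    qed
    ultimately show "rho_pt v \<in> U_tau \<and> proj4_eq (tau_pt (rho_pt v)) v" by simp
  qed
  show "\<forall>p\<in>(U_tau :: ('a \<times> 'a \<times> 'a) set). proj2_eq (rho_pt (tau_pt p)) p"
  proof
    fix p :: "'a \<times> 'a \<times> 'a" assume p: "p \<in> U_tau"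
    obtain x y z where pe: "p = (x,y,z)" by (cases p)
    have L: "LAM x y z \<noteq> 0" "(x,y,z) \<noteq> (0,0,0)" using p by (auto simp: pe Utau_iff)
    have r: "rho_pt (tau_pt p) = (x * LAM x y z, y * LAM x y z, z * LAM x y z)"
      by (simp add: pe rho_pt_def tau_pt_def rho_tau)
    show "proj2_eq (rho_pt (tau_pt p)) p"
      unfolding r unfolding pe proj2_eq_def using L
      by (auto intro!: exI[of _ "1 / LAM x y z"])
  qed
qed


end
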